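(* Let $n\ge 2$ and let $G\in\mathcal{G}_{2n}$ with $F(G)=n-1$. Then: (i) $G$ has no fixed double bond, i.e. $G-e$ has a perfect matching for every edge $e$ of $G$; (ii) the connectivity satisfies $\kappa(G)\geq n$. Moreover, if $G$ is minimal, then $G$ is $n$-regular and $\kappa(G)=\lambda(G)=n$, where $\lambda(G)$ is the edge connectivity.
   Context: All graphs are finite and simple. $\mathcal{G}_{2n}$ denotes the set of all graphs with $2n$ vertices that have a perfect matching. For a perfect matching $M$ of $G$, a forcing set of $M$ is a subset $S\subseteq M$ contained in no other perfect matching of $G$; $f(G,M)$ is the minimum size of a forcing set of $M$, and $F(G)$ is the maximum of $f(G,M)$ over all perfect matchings $M$ of $G$. A fixed double bond is an edge contained in every perfect matching. A graph $G\in\mathcal{G}_{2n}$ with $F(G)=n-1$ is called minimal if $F(G-e)\leq n-2$ for each edge $e$ of $G$. *)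

theory Defs
  imports Main
begin

definition simple_graph :: "'a set \<Rightarrow> 'a set set \<Rightarrow> bool" where
  "simple_graph V E \<longleftrightarrow> finite V \<and>
     (\<forall>e\<in>E. \<exists>u v. u \<noteq> v \<and> u \<in> V \<and> v \<in> V \<and> e = {u, v})"

definition perfect_matching :: "'a set \<Rightarrow> 'a set set \<Rightarrow> 'a set set \<Rightarrow> bool" where
  "perfect_matching V E M \<longleftrightarrow> M \<subseteq> E \<and> (\<forall>v\<in>V. \<exists>!e. e \<in> M \<and> v \<in> e)"

definition forcing_set :: "'a set \<Rightarrow> 'a set set \<Rightarrow> 'a set set \<Rightarrow> 'a set set \<Rightarrow> bool" where
  "forcing_set V E M S \<longleftrightarrow> S \<subseteq> M \<and>
     (\<forall>M'. perfect_matching V E M' \<and> S \<subseteq> M' \<longrightarrow> M' = M)"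

definition forcing_number :: "'a set \<Rightarrow> 'a set set \<Rightarrow> 'a set set \<Rightarrow> nat" where
  "forcing_number V E M = Min {card S | S. forcing_set V E M S}"

definition max_forcing_number :: "'a set \<Rightarrow> 'a set set \<Rightarrow> nat" where
  "max_forcing_number V E = Max {forcing_number V E M | M. perfect_matching V E M}"

definition fixed_double_bond :: "'a set \<Rightarrow> 'a set set \<Rightarrow> 'a set \<Rightarrow> bool" where
  "fixed_double_bond V E e \<longleftrightarrow> e \<in> E \<and> (\<forall>M. perfect_matching V E M \<longrightarrow> e \<in> M)"

definition connected_graph :: "'a set \<Rightarrow> 'a set set \<Rightarrow> bool" where
  "connected_graph V E \<longleftrightarrow>
     (\<forall>u\<in>V. \<forall>v\<in>V. (u, v) \<in> {(x, y). {x, y} \<in> E}\<^sup>*)"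

definition del_vertices_edges :: "'a set set \<Rightarrow> 'a set \<Rightarrow> 'a set set" where
  "del_vertices_edges E S = {e \<in> E. e \<inter> S = {}}"

definition vertex_connectivity :: "'a set \<Rightarrow> 'a set set \<Rightarrow> nat" where
  "vertex_connectivity V E = Min {card S | S. S \<subseteq> V \<and>
      (card (V - S) \<le> 1 \<or> \<not> connected_graph (V - S) (del_vertices_edges E S))}"

definition edge_connectivity :: "'a set \<Rightarrow> 'a set set \<Rightarrow> nat" where
  "edge_connectivity V E = Min {card D | D. D \<subseteq> E \<and> \<not> connected_graph V (E - D)}"

definition degree :: "'a set set \<Rightarrow> 'a \<Rightarrow> nat" where
  "degree E v = card {e \<in> E. v \<in> e}"

definition regular :: "'a set \<Rightarrow> 'a set set \<Rightarrow> nat \<Rightarrow> bool" where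
  "regular V E k \<longleftrightarrow> (\<forall>v\<in>V. degree E v = k)"

definition minimal_graph :: "'a set \<Rightarrow> 'a set set \<Rightarrow> bool" where
  "minimal_graph V E \<longleftrightarrow> max_forcing_number V E = card V div 2 - 1 \<and>
     (\<forall>e\<in>E. max_forcing_number V (E - {e}) \<le> card V div 2 - 2)"

end

theory Submission
  imports Defs
begin

definition alt :: "'a set set \<Rightarrow> 'a set \<Rightarrow> 'a set \<Rightarrow> bool" where
 "alt E g h \<longleftrightarrow> (\<exists>a b c d. g={a,b} \<and> h={c,d} \<and> {a,c}\<in>E \<and> {b,d}\<in>E)"

definition goodM :: "'a set \<Rightarrow> 'a set set \<Rightarrow> 'a set set \<Rightarrow> bool" where
 "goodM V E M \<longleftrightarrow> perfect_matching V E M \<and> (\<forall>g\<in>M. \<forall>h\<in>M. g\<noteq>h \<longrightarrow> alt E g h)"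

lemma sg_edge: "simple_graph V E \<Longrightarrow> e\<in>E \<Longrightarrow> \<exists>u v. u\<noteq>v \<and> u\<in>V \<and> v\<in>V \<and> e={u,v}"
  unfolding simple_graph_def by blast

lemma sg_sub: "simple_graph V E \<Longrightarrow> e\<in>E \<Longrightarrow> e \<subseteq> V"
  using sg_edge by fastforce

lemma sg_finite_E: "simple_graph V E \<Longrightarrow> finite E"
proof -
  assume a: "simple_graph V E"
  hence "E \<subseteq> Pow V" using sg_sub by blast
  moreover have "finite V" using a unfolding simple_graph_def by blast
  ultimately show ?thesis using finite_subset by blast
qed

lemma sg_minus: "simple_graph V E \<Longrightarrow> simple_graph V (E - D)"
  unfolding simple_graph_def by blast

lemma sg_noloop: "simple_graph V E \<Longrightarrow> {v} \<notin> E"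
proof
  assume "simple_graph V E" "{v} \<in> E"
  then obtain a b where "a\<noteq>b" "{v} = {a,b}" using sg_edge by blast
  thus False by (metis insert_absorb insert_iff singleton_insert_inj_eq)
qed

lemma pm_sub: "perfect_matching V E M \<Longrightarrow> M \<subseteq> E"
  unfolding perfect_matching_def by blast

lemma pm_cover: "perfect_matching V E M \<Longrightarrow> v\<in>V \<Longrightarrow> \<exists>f\<in>M. v\<in>f"
  unfolding perfect_matching_def by blast

lemma pm_uniq: "perfect_matching V E M \<Longrightarrow> simple_graph V E \<Longrightarrow> f1\<in>M \<Longrightarrow> f2\<in>M \<Longrightarrow> x\<in>f1 \<Longrightarrow> x\<in>f2 \<Longrightarrow> f1=f2"
proof -
  assume a: "perfect_matching V E M" "simple_graph V E" "f1\<in>M" "f2\<in>M" "x\<in>f1" "x\<in>f2"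
  have "x \<in> V" using a sg_sub pm_sub by blast
  thus ?thesis using a unfolding perfect_matching_def by blast
qed

lemma pm_edge: "perfect_matching V E M \<Longrightarrow> simple_graph V E \<Longrightarrow> f\<in>M \<Longrightarrow> \<exists>u v. u\<noteq>v \<and> u\<in>V \<and> v\<in>V \<and> f={u,v}"
  using sg_edge pm_sub by blast

lemma pm_union: "perfect_matching V E M \<Longrightarrow> simple_graph V E \<Longrightarrow> \<Union>M = V"
proof -
  assume p: "perfect_matching V E M" and s: "simple_graph V E"
  have "\<Union>M \<subseteq> V" using pm_sub[OF p] sg_sub[OF s] by blast
  moreover have "V \<subseteq> \<Union>M" using pm_cover[OF p] by blast
  ultimately show ?thesis by blast
qed

lemma pm_card: "simple_graph V E \<Longrightarrow> perfect_matching V E M \<Longrightarrow> card V = 2 * card M"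
proof -
  assume s: "simple_graph V E" and p: "perfect_matching V E M"
  have fE: "finite E" using sg_finite_E s .
  have fM: "finite M" using pm_sub[OF p] fE finite_subset by blast
  have fV: "finite V" using s unfolding simple_graph_def by blast
  have c2: "\<forall>c\<in>M. card c = 2" using pm_edge[OF p s] by fastforce
  have dj: "\<forall>c1\<in>M. \<forall>c2\<in>M. c1 \<noteq> c2 \<longrightarrow> c1 \<inter> c2 = {}" using pm_uniq[OF p s] by blast
  have "2 * card M = card (\<Union>M)"
    using card_partition[of M 2] fM c2 dj pm_union[OF p s] fV by simp
  thus ?thesis using pm_union[OF p s] by simp
qed

lemma pm_minus: "perfect_matching V E M \<Longrightarrow> e \<notin> M \<Longrightarrow> perfect_matching V (E - {e}) M"
  unfolding perfect_matching_def by blast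

lemma pm_subset_eq: "simple_graph V E \<Longrightarrow> perfect_matching V E M \<Longrightarrow> perfect_matching V E M' \<Longrightarrow> M \<subseteq> M' \<Longrightarrow> M' = M"
proof -
  assume s: "simple_graph V E" and p: "perfect_matching V E M" and p': "perfect_matching V E M'" and sub: "M \<subseteq> M'"
  have "f \<in> M" if f: "f \<in> M'" for f
  proof -
    obtain u v where "u\<in>V" "f={u,v}" using pm_edge[OF p' s f] by blast
    then obtain g where "g\<in>M" "u\<in>g" using pm_cover[OF p] by blast
    thus ?thesis using pm_uniq[OF p' s f, of g u] sub \<open>f={u,v}\<close> by blast
  qed
  thus ?thesis using sub by blast
qed

lemma two_ne: "{a,b} = {u,v} \<Longrightarrow> u\<noteq>v \<Longrightarrow> a\<noteq>b"
  by auto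

lemma swap:
  assumes s: "simple_graph V E" and p: "perfect_matching V E M"
    and eM: "e\<in>M" and gM: "g\<in>M" and ne: "e\<noteq>g" and ed: "e={a,b}" and gd: "g={c,d}"
    and ac: "{a,c}\<in>E" and bd: "{b,d}\<in>E"
  shows "perfect_matching V E (M - {e,g} \<union> {{a,c},{b,d}}) \<and> e \<notin> (M - {e,g} \<union> {{a,c},{b,d}})
     \<and> g \<notin> (M - {e,g} \<union> {{a,c},{b,d}})"
proof -
  let ?M = "M - {e,g} \<union> {{a,c},{b,d}}"
  have ab: "a\<noteq>b" using pm_edge[OF p s eM] ed two_ne by metis
  have cd: "c\<noteq>d" using pm_edge[OF p s gM] gd two_ne by metis
  have dj: "\<And>x. x\<in>e \<Longrightarrow> x\<in>g \<Longrightarrow> False" using pm_uniq[OF p s eM gM] ne by blast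
  have dist: "a\<noteq>c" "a\<noteq>d" "b\<noteq>c" "b\<noteq>d" using dj ed gd by blast+
  have uniq: "\<And>f x. f\<in>M \<Longrightarrow> x\<in>f \<Longrightarrow> x \<in> e \<union> g \<Longrightarrow> f = e \<or> f = g"
    using pm_uniq[OF p s] eM gM by blast
  have sub: "?M \<subseteq> E" using pm_sub[OF p] ac bd by blast
  have cov: "\<exists>!f. f \<in> ?M \<and> v \<in> f" if v: "v\<in>V" for v
  proof (cases "v \<in> {a,b,c,d}")
    case True
    show ?thesis
    proof (rule ex1I[where a="if v \<in> {a,c} then {a,c} else {b,d}"])
      show "(if v \<in> {a,c} then {a,c} else {b,d}) \<in> ?M \<and> v \<in> (if v \<in> {a,c} then {a,c} else {b,d})"
        using True by auto
    next
      fix f assume f: "f \<in> ?M \<and> v \<in> f"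
      have "f \<notin> M - {e,g}"
      proof
        assume "f \<in> M - {e,g}"
        thus False using uniq[of f v] f True ed gd by blast
      qed
      hence "f = {a,c} \<or> f = {b,d}" using f by blast
      thus "f = (if v \<in> {a,c} then {a,c} else {b,d})"
      proof
        assume "f = {a,c}" thus ?thesis using f by simp
      next
        assume fbd: "f = {b,d}"
        hence "v = b \<or> v = d" using f by simp
        hence "v \<notin> {a,c}" using dist ab cd by auto
        thus ?thesis using fbd by simp
      qed
    qed
  next
    case False
    obtain h where h: "h\<in>M" "v\<in>h" using pm_cover[OF p v] by blast
    have "h \<noteq> e" "h \<noteq> g" using h False ed gd by blast+
    show ?thesis
    proof (rule ex1I[where a=h])
      show "h \<in> ?M \<and> v \<in> h" using h \<open>h \<noteq> e\<close> \<open>h \<noteq> g\<close> by blast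
    next
      fix f assume f: "f \<in> ?M \<and> v \<in> f"
      hence "f \<in> M" using False by blast
      thus "f = h" using pm_uniq[OF p s _ h(1), of f v] f h by blast
    qed
  qed
  have "e \<noteq> {a,c}" "e \<noteq> {b,d}" "g \<noteq> {a,c}" "g \<noteq> {b,d}"
    using ed gd dist ab cd by (simp_all add: doubleton_eq_iff)
  moreover have "perfect_matching V E ?M" unfolding perfect_matching_def
    using sub cov by simp
  ultimately show ?thesis by simp
qed

lemma alt_sym: "alt E g h \<Longrightarrow> alt E h g"
proof -
  assume "alt E g h"
  then obtain a b c d where "g={a,b}" "h={c,d}" "{a,c}\<in>E" "{b,d}\<in>E" unfolding alt_def by blast
  moreover have "{c,a} = {a,c}" "{d,b} = {b,d}" by auto
  ultimately show ?thesis unfolding alt_def by metis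
qed

lemma fs_self: "simple_graph V E \<Longrightarrow> perfect_matching V E M \<Longrightarrow> forcing_set V E M M"
  unfolding forcing_set_def using pm_subset_eq by blast

lemma fs_set_fin: "simple_graph V E \<Longrightarrow> perfect_matching V E M \<Longrightarrow>
   finite {card S | S. forcing_set V E M S} \<and> {card S | S. forcing_set V E M S} \<noteq> {}"
proof -
  assume s: "simple_graph V E" and p: "perfect_matching V E M"
  have fM: "finite M" using pm_sub[OF p] sg_finite_E[OF s] finite_subset by blast
  have "{card S | S. forcing_set V E M S} \<subseteq> card ` Pow M" unfolding forcing_set_def by blast
  hence "finite {card S | S. forcing_set V E M S}" using fM finite_subset by blast
  moreover have "card M \<in> {card S | S. forcing_set V E M S}" using fs_self[OF s p] by blast
  ultimately show ?thesis by blast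
qed

lemma fn_attained: "simple_graph V E \<Longrightarrow> perfect_matching V E M \<Longrightarrow>
   \<exists>S. forcing_set V E M S \<and> card S = forcing_number V E M"
proof -
  assume s: "simple_graph V E" and p: "perfect_matching V E M"
  have "forcing_number V E M \<in> {card S | S. forcing_set V E M S}"
    unfolding forcing_number_def using fs_set_fin[OF s p] Min_in by blast
  thus ?thesis by auto
qed

lemma fn_le: "simple_graph V E \<Longrightarrow> perfect_matching V E M \<Longrightarrow> forcing_set V E M S \<Longrightarrow>
   forcing_number V E M \<le> card S"
  unfolding forcing_number_def using fs_set_fin Min_le by blast

lemma two_elems: "finite A \<Longrightarrow> card A \<ge> 2 \<Longrightarrow> \<exists>x y. x\<in>A \<and> y\<in>A \<and> x\<noteq>y"
proof -
  assume f: "finite A" and c: "card A \<ge> 2"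
  then obtain x where x: "x\<in>A" by fastforce
  have "card (A - {x}) \<ge> 1" using c x f by simp
  hence "A - {x} \<noteq> {}" by fastforce
  then obtain y where "y \<in> A - {x}" by blast
  thus ?thesis using x by blast
qed

lemma good_fn:
  assumes s: "simple_graph V E" and gd: "goodM V E M" and cV: "card V = 2*n"
  shows "forcing_number V E M \<ge> n - 1"
proof (rule ccontr)
  assume "\<not> forcing_number V E M \<ge> n - 1"
  hence lt: "forcing_number V E M + 2 \<le> n" by simp
  have p: "perfect_matching V E M" using gd unfolding goodM_def by blast
  obtain S where S: "forcing_set V E M S" "card S = forcing_number V E M" using fn_attained[OF s p] by blast
  have SM: "S \<subseteq> M" using S(1) unfolding forcing_set_def by blast
  have fM: "finite M" using pm_sub[OF p] sg_finite_E[OF s] finite_subset by blast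
  have cM: "card M = n" using pm_card[OF s p] cV by simp
  have "card (M - S) = n - card S" using card_Diff_subset[OF finite_subset[OF SM fM] SM] cM by simp
  hence "card (M - S) \<ge> 2" using lt S(2) by simp
  then obtain e g where eg: "e \<in> M - S" "g \<in> M - S" "e \<noteq> g" using two_elems[of "M - S"] fM by blast
  have "alt E e g" using gd eg unfolding goodM_def by blast
  then obtain a b c d where abcd: "e={a,b}" "g={c,d}" "{a,c}\<in>E" "{b,d}\<in>E" unfolding alt_def by blast
  let ?M = "M - {e,g} \<union> {{a,c},{b,d}}"
  have sw: "perfect_matching V E ?M" "e \<notin> ?M"
    using swap[OF s p _ _ eg(3) abcd] eg by blast+
  have "S \<subseteq> ?M" using SM eg by blast
  hence "?M = M" using S(1) sw(1) unfolding forcing_set_def by blast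
  thus False using sw(2) eg by blast
qed

lemma maxF_ge:
  assumes s: "simple_graph V E" and gd: "goodM V E M" and cV: "card V = 2*n"
  shows "max_forcing_number V E \<ge> n - 1"
proof -
  have p: "perfect_matching V E M" using gd unfolding goodM_def by blast
  have "{forcing_number V E M | M. perfect_matching V E M} \<subseteq> forcing_number V E ` Pow E"
    using pm_sub by blast
  hence fin: "finite {forcing_number V E M | M. perfect_matching V E M}"
    using sg_finite_E[OF s] finite_subset by blast
  have "forcing_number V E M \<le> max_forcing_number V E"
    unfolding max_forcing_number_def using p fin Max_ge by blast
  thus ?thesis using good_fn[OF s gd cV] by simp
qed

lemma other_end: "a \<in> {u,v} \<Longrightarrow> u\<noteq>v \<Longrightarrow> \<exists>y. y\<noteq>a \<and> {u,v} = {a,y}"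
  by auto

lemma altfrom:
  assumes s: "simple_graph V E" and p: "perfect_matching V E M" and p': "perfect_matching V E M'"
    and eM: "e\<in>M" and gM: "g\<in>M" and ne: "e\<noteq>g" and sub: "M - {e,g} \<subseteq> M'" and en: "e \<notin> M'"
  shows "alt E e g"
proof -
  obtain a b where ab: "a\<noteq>b" "e={a,b}" using pm_edge[OF p s eM] by blast
  obtain c d where cd: "c\<noteq>d" "g={c,d}" using pm_edge[OF p s gM] by blast
  have dj: "\<And>x. x\<in>e \<Longrightarrow> x\<in>g \<Longrightarrow> False" using pm_uniq[OF p s eM gM] ne by blast
  have inside: "f \<subseteq> e \<union> g" if f: "f \<in> M'" and x: "x \<in> e \<union> g" "x \<in> f" for f x
  proof
    fix y assume y: "y \<in> f"
    have "y \<in> V" using y f pm_sub[OF p'] sg_sub[OF s] by blast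
    then obtain h where h: "h\<in>M" "y\<in>h" using pm_cover[OF p] by blast
    show "y \<in> e \<union> g"
    proof (cases "h = e \<or> h = g")
      case True thus ?thesis using h by blast
    next
      case False
      hence "h \<in> M'" using sub h by blast
      hence "f = h" using pm_uniq[OF p' s f _ y h(2)] by blast
      hence "x \<in> h" using x by blast
      hence "h = e \<or> h = g" using x(1) pm_uniq[OF p s h(1) eM] pm_uniq[OF p s h(1) gM] by blast
      thus ?thesis using False by blast
    qed
  qed
  have aV: "a \<in> V" "b \<in> V" using ab eM pm_sub[OF p] sg_sub[OF s] by blast+
  obtain fa where fa: "fa \<in> M'" "a \<in> fa" using pm_cover[OF p' aV(1)] by blast
  obtain fb where fb: "fb \<in> M'" "b \<in> fb" using pm_cover[OF p' aV(2)] by blast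
  obtain y where y: "y\<noteq>a" "fa = {a,y}" using pm_edge[OF p' s fa(1)] fa(2) other_end by metis
  obtain z where z: "z\<noteq>b" "fb = {b,z}" using pm_edge[OF p' s fb(1)] fb(2) other_end by metis
  have yin: "y \<in> e \<union> g" using inside[OF fa(1), of a] ab y by blast
  have zin: "z \<in> e \<union> g" using inside[OF fb(1), of b] ab z by blast
  have yb: "y \<noteq> b" using y en fa ab by blast
  have za: "z \<noteq> a"
  proof
    assume "z = a" hence "fb = e" using z ab by auto
    thus False using en fb by blast
  qed
  have yg: "y \<in> g" using yin y yb ab by blast
  have zg: "z \<in> g" using zin z za ab by blast
  have yz: "y \<noteq> z"
  proof
    assume "y = z"
    hence "fa = fb" using pm_uniq[OF p' s fa(1) fb(1), of y] y z by blast
    hence "b \<in> {a,y}" using fb y by blast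
    hence "b = y" using ab by blast
    thus False using yg dj ab by blast
  qed
  have "g = {y,z}" using yg zg yz cd by blast
  moreover have "{a,y} \<in> E" "{b,z} \<in> E" using fa fb y z pm_sub[OF p'] by blast+
  ultimately show ?thesis unfolding alt_def using ab by blast
qed

lemma fn_good:
  assumes s: "simple_graph V E" and p: "perfect_matching V E M" and cV: "card V = 2*n"
    and n2: "n \<ge> 2" and fn: "forcing_number V E M = n - 1"
  shows "goodM V E M"
proof -
  have cM: "card M = n" using pm_card[OF s p] cV by simp
  have fM: "finite M" using pm_sub[OF p] sg_finite_E[OF s] finite_subset by blast
  have "alt E e g" if eg: "e\<in>M" "g\<in>M" "e\<noteq>g" for e g
  proof -
    let ?S = "M - {e,g}"
    have "card ?S = n - 2" using cM eg fM by (simp add: card_Diff_subset)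
    hence "\<not> forcing_set V E M ?S" using fn_le[OF s p] fn n2 by fastforce
    then obtain M' where M': "perfect_matching V E M'" "?S \<subseteq> M'" "M' \<noteq> M"
      unfolding forcing_set_def by blast
    have "e \<notin> M' \<or> g \<notin> M'"
    proof (rule ccontr)
      assume "\<not> (e \<notin> M' \<or> g \<notin> M')"
      hence "M \<subseteq> M'" using M'(2) by blast
      thus False using pm_subset_eq[OF s p M'(1)] M'(3) by blast
    qed
    thus ?thesis
    proof
      assume "e \<notin> M'" thus ?thesis using altfrom[OF s p M'(1) eg] M'(2) by blast
    next
      assume "g \<notin> M'"
      moreover have "M - {g,e} \<subseteq> M'" using M'(2) by blast
      ultimately have "alt E g e" using altfrom[OF s p M'(1) eg(2) eg(1)] eg(3) by blast
      thus ?thesis using alt_sym by blast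
    qed
  qed
  thus ?thesis unfolding goodM_def using p by blast
qed

lemma exists_good:
  assumes s: "simple_graph V E" and n2: "n \<ge> 2" and cV: "card V = 2*n"
    and ex: "\<exists>M. perfect_matching V E M" and F: "max_forcing_number V E = n - 1"
  shows "\<exists>M. goodM V E M"
proof -
  have "{forcing_number V E M | M. perfect_matching V E M} \<subseteq> forcing_number V E ` Pow E"
    using pm_sub by blast
  hence fin: "finite {forcing_number V E M | M. perfect_matching V E M}"
    using sg_finite_E[OF s] finite_subset by blast
  have ne: "{forcing_number V E M | M. perfect_matching V E M} \<noteq> {}" using ex by blast
  have "max_forcing_number V E \<in> {forcing_number V E M | M. perfect_matching V E M}"
    unfolding max_forcing_number_def using Max_in[OF fin ne] .
  then obtain M where "perfect_matching V E M" "forcing_number V E M = n - 1" using F by auto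
  thus ?thesis using fn_good[OF s _ cV n2] by blast
qed

lemma good_nb:
  assumes gd: "goodM V E M" and h: "h\<in>M" "h'\<in>M" "h\<noteq>h'" and x: "x\<in>h'"
  shows "\<exists>y\<in>h. {x,y} \<in> E"
proof -
  have "alt E h' h" using gd h unfolding goodM_def by blast
  then obtain a b c d where "h'={a,b}" "h={c,d}" "{a,c}\<in>E" "{b,d}\<in>E" unfolding alt_def by blast
  thus ?thesis using x by blast
qed

lemma good_avoid:
  assumes s: "simple_graph V E" and gd: "goodM V E M" and cV: "card V = 2*n" and n2: "n \<ge> 2"
    and eE: "e \<in> E"
  shows "\<exists>M'. perfect_matching V E M' \<and> e \<notin> M'"
proof (cases "e \<in> M")
  case False thus ?thesis using gd unfolding goodM_def by blast
next
  case True
  have p: "perfect_matching V E M" using gd unfolding goodM_def by blast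
  have cM: "card M = n" using pm_card[OF s p] cV by simp
  have fM: "finite M" using pm_sub[OF p] sg_finite_E[OF s] finite_subset by blast
  have "card (M - {e}) \<ge> 1" using cM n2 True fM by simp
  hence "M - {e} \<noteq> {}" by fastforce
  then obtain g where g: "g \<in> M" "g \<noteq> e" by blast
  have "alt E e g" using gd g True unfolding goodM_def by blast
  then obtain a b c d where abcd: "e={a,b}" "g={c,d}" "{a,c}\<in>E" "{b,d}\<in>E" unfolding alt_def by blast
  show ?thesis using swap[OF s p True g(1) _ abcd] g(2) by metis
qed

definition rel :: "'a set set \<Rightarrow> ('a \<times> 'a) set" where
  "rel E' = {(x, y). {x, y} \<in> E'}"

lemma conn_rel: "connected_graph V E' \<longleftrightarrow> (\<forall>u\<in>V. \<forall>v\<in>V. (u,v) \<in> (rel E')\<^sup>*)"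
  unfolding connected_graph_def rel_def by simp

lemma rel_sym: "(x,y) \<in> (rel E')\<^sup>* \<Longrightarrow> (y,x) \<in> (rel E')\<^sup>*"
proof -
  assume a: "(x,y) \<in> (rel E')\<^sup>*"
  have "(rel E')\<inverse> = rel E'" unfolding rel_def by (auto simp: insert_commute)
  thus ?thesis using rtrancl_converseI[OF a] by simp
qed

lemma kappa_one:
  assumes s: "simple_graph V E" and gd: "goodM V E M" and cV: "card V = 2*n" and n2: "n \<ge> 2"
    and SV: "S \<subseteq> V" and cS: "card S < n"
  shows "card (V - S) > 1 \<and> connected_graph (V - S) (del_vertices_edges E S)"
proof -
  have p: "perfect_matching V E M" using gd unfolding goodM_def by blast
  have cM: "card M = n" using pm_card[OF s p] cV by simp
  have fV: "finite V" using s unfolding simple_graph_def by blast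
  have fS: "finite S" using SV fV finite_subset by blast
  have c1: "card (V - S) > 1" using card_Diff_subset[OF fS SV] cV cS n2 by simp
  have "\<exists>h\<in>M. h \<inter> S = {}"
  proof (rule ccontr)
    assume "\<not> (\<exists>h\<in>M. h \<inter> S = {})"
    hence ne: "\<forall>h\<in>M. \<exists>x. x \<in> h \<inter> S" by blast
    define f where "f h = (SOME x. x \<in> h \<inter> S)" for h
    have fin: "f h \<in> h \<inter> S" if "h\<in>M" for h using ne that unfolding f_def by (meson someI_ex)
    have "inj_on f M"
    proof (rule inj_onI)
      fix h1 h2 assume "h1\<in>M" "h2\<in>M" "f h1 = f h2"
      thus "h1 = h2" using fin pm_uniq[OF p s, of h1 h2 "f h1"] by (metis IntD1)
    qed
    moreover have "f ` M \<subseteq> S" using fin by blast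
    ultimately have "card M \<le> card S" using card_inj_on_le fS by blast
    thus False using cM cS by simp
  qed
  then obtain h where h: "h\<in>M" "h \<inter> S = {}" by blast
  obtain a b where ab: "a\<noteq>b" "h={a,b}" using pm_edge[OF p s h(1)] by blast
  let ?E = "del_vertices_edges E S"
  have edge: "(x,y) \<in> rel ?E" if "{x,y}\<in>E" "x\<notin>S" "y\<notin>S" for x y
    using that unfolding rel_def del_vertices_edges_def by auto
  have hE: "{b,a} \<in> E" using h ab pm_sub[OF p] by (auto simp: insert_commute)
  have ba: "(b,a) \<in> (rel ?E)\<^sup>*" using edge[OF hE] h ab by blast
  have toa: "(u,a) \<in> (rel ?E)\<^sup>*" if u: "u \<in> V - S" for u
  proof -
    obtain h' where h': "h'\<in>M" "u\<in>h'" using pm_cover[OF p] u by blast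
    show ?thesis
    proof (cases "h' = h")
      case True
      hence "u = a \<or> u = b" using h' ab by blast
      thus ?thesis using ba by blast
    next
      case False
      then obtain y where y: "y\<in>h" "{u,y}\<in>E" using good_nb[OF gd h(1) h'(1) _ h'(2)] by metis
      have "(u,y) \<in> rel ?E" using edge[OF y(2)] u y h by blast
      moreover have "y = a \<or> y = b" using y ab by blast
      ultimately show ?thesis using ba by (meson converse_rtrancl_into_rtrancl r_into_rtrancl)
    qed
  qed
  have "connected_graph (V - S) ?E" unfolding conn_rel
    using toa rel_sym rtrancl_trans by metis
  thus ?thesis using c1 by blast
qed

lemma min_uniq:
  assumes s: "simple_graph V E" and gd: "goodM V E M" and cV: "card V = 2*n" and n2: "n \<ge> 2"
    and mn: "minimal_graph V E" and vV: "v\<in>V" and gM: "g\<in>M" and vg: "v\<notin>g"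
    and c: "c\<in>g" and d: "d\<in>g" and cd: "c\<noteq>d" and vc: "{v,c}\<in>E" and vd: "{v,d}\<in>E"
  shows False
proof -
  have p: "perfect_matching V E M" using gd unfolding goodM_def by blast
  obtain mv where mv: "mv\<in>M" "v\<in>mv" using pm_cover[OF p vV] by blast
  have mvg: "mv \<noteq> g" using mv vg by blast
  have dj: "\<And>x. x\<in>mv \<Longrightarrow> x\<in>g \<Longrightarrow> False" using pm_uniq[OF p s mv(1) gM] mvg by blast
  have "alt E mv g" using gd mv(1) gM mvg unfolding goodM_def by blast
  then obtain a b c' d' where w: "mv={a,b}" "g={c',d'}" "{a,c'}\<in>E" "{b,d'}\<in>E" unfolding alt_def by blast
  define t where "t = (if v = a then c' else d')"
  have vab: "v = a \<or> v = b" using mv w by blast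
  obtain sv where sv: "sv\<in>g" "{v,sv}\<in>E" "sv \<noteq> t"
  proof (cases "c = t")
    case True thus ?thesis using that[of d] d vd cd by blast
  next
    case False thus ?thesis using that[of c] c vc by blast
  qed
  let ?e = "{v,sv}"
  let ?E = "E - {?e}"
  have key: "\<And>x y. x\<in>mv \<Longrightarrow> y\<in>g \<Longrightarrow> {x,y} = ?e \<Longrightarrow> x = v \<and> y = sv"
  proof -
    fix x y assume xy: "x\<in>mv" "y\<in>g" "{x,y} = ?e"
    hence "(x = v \<and> y = sv) \<or> (x = sv \<and> y = v)" by (metis doubleton_eq_iff)
    thus "x = v \<and> y = sv" using xy dj mv sv by blast
  qed
  have w1: "{a,c'} \<noteq> ?e"
  proof
    assume "{a,c'} = ?e"
    hence "a = v \<and> c' = sv" using key w by blast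
    thus False using sv t_def by simp
  qed
  have w2: "{b,d'} \<noteq> ?e"
  proof
    assume "{b,d'} = ?e"
    hence bv: "b = v \<and> d' = sv" using key w by blast
    show False
    proof (cases "v = a")
      case True
      hence "a = b" using bv by simp
      thus False using pm_edge[OF p s mv(1)] w(1) two_ne by metis
    next
      case False thus False using sv t_def bv by simp
    qed
  qed
  have altmg: "alt ?E mv g" unfolding alt_def using w w1 w2 by blast
  have eM: "?e \<notin> M"
  proof
    assume "?e \<in> M"
    hence "?e = mv" using pm_uniq[OF p s _ mv(1), of ?e v] mv(2) by blast
    thus False using dj sv by blast
  qed
  have p': "perfect_matching V ?E M" using pm_minus[OF p eM] .
  have "alt ?E h1 h2" if h: "h1\<in>M" "h2\<in>M" "h1\<noteq>h2" for h1 h2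
  proof (cases "(h1 = mv \<and> h2 = g) \<or> (h1 = g \<and> h2 = mv)")
    case True thus ?thesis using altmg alt_sym by blast
  next
    case False
    have "alt E h1 h2" using gd h unfolding goodM_def by blast
    then obtain x1 y1 x2 y2 where q: "h1={x1,y1}" "h2={x2,y2}" "{x1,x2}\<in>E" "{y1,y2}\<in>E"
      unfolding alt_def by blast
    have gen: "{x,y} \<noteq> ?e" if xy: "x\<in>h1" "y\<in>h2" for x y
    proof
      assume eq: "{x,y} = ?e"
      hence "(x = v \<and> y = sv) \<or> (x = sv \<and> y = v)" by (metis doubleton_eq_iff)
      thus False
      proof
        assume "x = v \<and> y = sv"
        hence "h1 = mv" "h2 = g" using pm_uniq[OF p s h(1) mv(1), of v] pm_uniq[OF p s h(2) gM, of sv] xy mv sv by blast+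
        thus False using False by blast
      next
        assume "x = sv \<and> y = v"
        hence "h2 = mv" "h1 = g" using pm_uniq[OF p s h(2) mv(1), of v] pm_uniq[OF p s h(1) gM, of sv] xy mv sv by blast+
        thus False using False by blast
      qed
    qed
    have "{x1,x2} \<noteq> ?e" "{y1,y2} \<noteq> ?e" using gen q by blast+
    thus ?thesis unfolding alt_def using q by blast
  qed
  hence gd': "goodM V ?E M" unfolding goodM_def using p' by blast
  have "max_forcing_number V ?E \<ge> n - 1" using maxF_ge[OF sg_minus[OF s] gd' cV] .
  moreover have "?e \<in> E" using sv by blast
  hence "max_forcing_number V ?E \<le> card V div 2 - 2" using mn unfolding minimal_graph_def by blast
  ultimately show False using cV n2 by simp
qed

definition nbr :: "'a set set \<Rightarrow> 'a \<Rightarrow> 'a set" where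
  "nbr E v = {w. {v,w} \<in> E}"

lemma nbr_ne: "simple_graph V E \<Longrightarrow> w \<in> nbr E v \<Longrightarrow> w \<noteq> v"
  unfolding nbr_def using sg_noloop by fastforce

lemma nbr_V: "simple_graph V E \<Longrightarrow> nbr E v \<subseteq> V"
  unfolding nbr_def using sg_sub by blast

lemma deg_nbr:
  assumes s: "simple_graph V E"
  shows "degree E v = card (nbr E v)"
proof -
  have "inj_on (\<lambda>w. {v,w}) (nbr E v)"
  proof (rule inj_onI)
    fix w1 w2 assume w: "w1 \<in> nbr E v" "w2 \<in> nbr E v" "{v,w1} = {v,w2}"
    have "w1 \<noteq> v" using nbr_ne[OF s w(1)] .
    thus "w1 = w2" using w(3) by (metis doubleton_eq_iff)
  qed
  moreover have "(\<lambda>w. {v,w}) ` nbr E v = {f\<in>E. v\<in>f}"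
  proof
    show "(\<lambda>w. {v,w}) ` nbr E v \<subseteq> {f\<in>E. v\<in>f}" unfolding nbr_def by blast
  next
    show "{f\<in>E. v\<in>f} \<subseteq> (\<lambda>w. {v,w}) ` nbr E v"
    proof
      fix f assume f: "f \<in> {f\<in>E. v\<in>f}"
      then obtain x y where xy: "f={x,y}" using sg_edge[OF s] by blast
      hence "f = {v,x} \<or> f = {v,y}" using f by auto
      thus "f \<in> (\<lambda>w. {v,w}) ` nbr E v" using f unfolding nbr_def by blast
    qed
  qed
  ultimately show ?thesis unfolding degree_def using card_image by metis
qed

definition mE :: "'a set set \<Rightarrow> 'a \<Rightarrow> 'a set" where
  "mE M w = (SOME h. h \<in> M \<and> w \<in> h)"

lemma mE_in: "perfect_matching V E M \<Longrightarrow> w \<in> V \<Longrightarrow> mE M w \<in> M \<and> w \<in> mE M w"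
  unfolding mE_def using pm_cover by (metis (mono_tags, lifting) someI_ex)

lemma mE_eq: "perfect_matching V E M \<Longrightarrow> simple_graph V E \<Longrightarrow> w \<in> V \<Longrightarrow> h \<in> M \<Longrightarrow> w \<in> h \<Longrightarrow> mE M w = h"
  using mE_in pm_uniq by metis

lemma nbr_card:
  assumes s: "simple_graph V E" and gd: "goodM V E M" and cV: "card V = 2*n" and n2: "n \<ge> 2"
    and mn: "minimal_graph V E" and vV: "v\<in>V"
  shows "card (nbr E v) = n"
proof -
  have p: "perfect_matching V E M" using gd unfolding goodM_def by blast
  have cM: "card M = n" using pm_card[OF s p] cV by simp
  have inj: "inj_on (mE M) (nbr E v)"
  proof (rule inj_onI)
    fix w1 w2 assume w: "w1 \<in> nbr E v" "w2 \<in> nbr E v" "mE M w1 = mE M w2"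
    have wV: "w1 \<in> V" "w2 \<in> V" using w nbr_V[OF s] by blast+
    let ?h = "mE M w1"
    have h: "?h \<in> M" "w1 \<in> ?h" "w2 \<in> ?h" using mE_in[OF p wV(1)] mE_in[OF p wV(2)] w(3) by auto
    show "w1 = w2"
    proof (rule ccontr)
      assume ne: "w1 \<noteq> w2"
      show False
      proof (cases "v \<in> ?h")
        case True
        obtain x y where xy: "?h = {x,y}" using pm_edge[OF p s h(1)] by blast
        have "w1 \<noteq> v" "w2 \<noteq> v" using nbr_ne[OF s] w by blast+
        moreover have "w1 \<in> {x,y}" "w2 \<in> {x,y}" "v \<in> {x,y}" using xy h True by metis+
        ultimately show False using ne by auto
      next
        case False
        show False using min_uniq[OF s gd cV n2 mn vV h(1) False h(2) h(3) ne] w unfolding nbr_def by blast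
      qed
    qed
  qed
  have img: "mE M ` nbr E v = M"
  proof
    show "mE M ` nbr E v \<subseteq> M" using mE_in[OF p] nbr_V[OF s] by blast
  next
    show "M \<subseteq> mE M ` nbr E v"
    proof
      fix h assume h: "h \<in> M"
      obtain mv where mv: "mv\<in>M" "v\<in>mv" using pm_cover[OF p vV] by blast
      show "h \<in> mE M ` nbr E v"
      proof (cases "v \<in> h")
        case True
        obtain v' where v': "v' \<noteq> v" "h = {v,v'}" using pm_edge[OF p s h] True other_end by metis
        have "{v,v'} \<in> E" using v' h pm_sub[OF p] by blast
        hence "v' \<in> nbr E v" unfolding nbr_def by blast
        moreover have "mE M v' = h" using mE_eq[OF p s _ h] v' nbr_V[OF s] calculation by blast
        ultimately show ?thesis by blast
      next
        case False
        hence "mv \<noteq> h" using mv by blast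
        then obtain y where y: "y \<in> h" "{v,y} \<in> E" using good_nb[OF gd h mv(1) _ mv(2)] by blast
        hence "y \<in> nbr E v" unfolding nbr_def by blast
        moreover have "mE M y = h" using mE_eq[OF p s _ h] y nbr_V[OF s] calculation by blast
        ultimately show ?thesis by blast
      qed
    qed
  qed
  show ?thesis using card_image[OF inj] img cM by simp
qed

lemma lam_gen:
  assumes s: "simple_graph V E" and gd: "goodM V E M" and cV: "card V = 2*n"
    and DE: "D \<subseteq> E" and CV: "C \<subseteq> V" and yC: "y \<in> C" and zC: "z \<in> V - C"
    and cut: "\<And>x x'. {x,x'}\<in>E \<Longrightarrow> x\<in>C \<Longrightarrow> x' \<in> V - C \<Longrightarrow> {x,x'} \<in> D"
    and H: "\<not>({y,z}\<in>E \<and> (\<exists>g1\<in>M. y\<in>g1 \<and> g1\<subseteq>C) \<and> (\<exists>g2\<in>M. z\<in>g2 \<and> g2 \<subseteq> V-C))"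
  shows "n \<le> card D"
proof -
  have p: "perfect_matching V E M" using gd unfolding goodM_def by blast
  have cM: "card M = n" using pm_card[OF s p] cV by simp
  have fD: "finite D" using DE sg_finite_E[OF s] finite_subset by blast
  define sz where "sz g = (SOME x. x\<in>g \<and> {z,x}\<in>E)" for g
  define sy where "sy g = (SOME x. x\<in>g \<and> {y,x}\<in>E)" for g
  define psi where "psi g = (if g \<subseteq> C then {z, sz g} else if g \<subseteq> V - C then {y, sy g} else g)" for g
  have yV: "y \<in> V" using yC CV by blast
  have zV: "z \<in> V" using zC by blast
  have F1: "psi g = {z, sz g} \<and> sz g \<in> g \<and> {z, sz g} \<in> E" if g: "g\<in>M" "g \<subseteq> C" for g
  proof -
    have "mE M z \<noteq> g" using mE_in[OF p zV] g zC by blast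
    hence "\<exists>x\<in>g. {z,x}\<in>E" using good_nb[OF gd g(1) _ _, of "mE M z" z] mE_in[OF p zV] by metis
    hence "sz g \<in> g \<and> {z, sz g} \<in> E" unfolding sz_def by (metis (mono_tags, lifting) someI_ex)
    thus ?thesis using g unfolding psi_def by simp
  qed
  have F2: "psi g = {y, sy g} \<and> sy g \<in> g \<and> {y, sy g} \<in> E" if g: "g\<in>M" "\<not> g \<subseteq> C" "g \<subseteq> V - C" for g
  proof -
    have "mE M y \<noteq> g" using mE_in[OF p yV] g yC by blast
    hence "\<exists>x\<in>g. {y,x}\<in>E" using good_nb[OF gd g(1) _ _, of "mE M y" y] mE_in[OF p yV] by metis
    hence "sy g \<in> g \<and> {y, sy g} \<in> E" unfolding sy_def by (metis (mono_tags, lifting) someI_ex)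
    thus ?thesis using g unfolding psi_def by simp
  qed
  have F3: "psi g = g" if g: "\<not> g \<subseteq> C" "\<not> g \<subseteq> V - C" for g
    using g unfolding psi_def by simp
  have gV: "g \<subseteq> V" if "g \<in> M" for g using that pm_sub[OF p] sg_sub[OF s] by blast
  have inD: "psi g \<in> D" if g: "g \<in> M" for g
  proof (cases "g \<subseteq> C")
    case True
    hence "{sz g, z} \<in> D" using F1[OF g True] cut[of "sz g" z] zC by (auto simp: insert_commute)
    thus ?thesis using F1[OF g True] by (simp add: insert_commute)
  next
    case nC: False
    show ?thesis
    proof (cases "g \<subseteq> V - C")
      case True
      thus ?thesis using F2[OF g nC True] cut[of y "sy g"] yC by auto
    next
      case False
      obtain a b where ab: "g = {a,b}" using pm_edge[OF p s g] by blast
      have "(a \<in> C \<and> b \<notin> C) \<or> (b \<in> C \<and> a \<notin> C)" using nC False gV[OF g] ab by blast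
      hence "{a,b} \<in> D \<or> {b,a} \<in> D" using cut[of a b] cut[of b a] g ab pm_sub[OF p] gV[OF g]
        by (auto simp: insert_commute)
      hence "g \<in> D" using ab by (auto simp: insert_commute)
      thus ?thesis using F3[OF nC False] by simp
    qed
  qed
  have c12: False if g: "g1 \<in> M" "g2 \<in> M" "g1 \<subseteq> C" "\<not> g2 \<subseteq> C" "g2 \<subseteq> V - C" "psi g1 = psi g2" for g1 g2
  proof -
    have e: "{z, sz g1} = {y, sy g2}" using F1[OF g(1,3)] F2[OF g(2,4,5)] g(6) by simp
    have "z \<noteq> y" using yC zC by blast
    hence "z = sy g2 \<and> sz g1 = y" using e by (metis doubleton_eq_iff)
    thus False using H F1[OF g(1,3)] F2[OF g(2,4,5)] g by (metis insert_commute)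
  qed
  have c13: False if g: "g1 \<in> M" "g2 \<in> M" "g1 \<subseteq> C" "\<not> g2 \<subseteq> C" "\<not> g2 \<subseteq> V - C" "psi g1 = psi g2" for g1 g2
  proof -
    have "sz g1 \<in> g2" using F1[OF g(1,3)] F3[OF g(4,5)] g(6) by blast
    hence "g1 = g2" using pm_uniq[OF p s g(1,2)] F1[OF g(1,3)] by blast
    thus False using g by blast
  qed
  have c23: False if g: "g1 \<in> M" "g2 \<in> M" "\<not> g1 \<subseteq> C" "g1 \<subseteq> V - C" "\<not> g2 \<subseteq> C" "\<not> g2 \<subseteq> V - C" "psi g1 = psi g2" for g1 g2
  proof -
    have "sy g1 \<in> g2" using F2[OF g(1,3,4)] F3[OF g(5,6)] g(7) by blast
    hence "g1 = g2" using pm_uniq[OF p s g(1,2)] F2[OF g(1,3,4)] by blast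
    thus False using g by blast
  qed
  have c11: "g1 = g2" if g: "g1 \<in> M" "g2 \<in> M" "g1 \<subseteq> C" "g2 \<subseteq> C" "psi g1 = psi g2" for g1 g2
  proof -
    have e: "{z, sz g1} = {z, sz g2}" using F1[OF g(1,3)] F1[OF g(2,4)] g(5) by simp
    have "sz g1 \<noteq> z" using F1[OF g(1,3)] g(3) zC by blast
    hence "sz g1 = sz g2" using e by (metis doubleton_eq_iff)
    thus ?thesis using pm_uniq[OF p s g(1,2)] F1[OF g(1,3)] F1[OF g(2,4)] by metis
  qed
  have c22: "g1 = g2" if g: "g1 \<in> M" "g2 \<in> M" "\<not> g1 \<subseteq> C" "g1 \<subseteq> V - C" "\<not> g2 \<subseteq> C" "g2 \<subseteq> V - C" "psi g1 = psi g2" for g1 g2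
  proof -
    have e: "{y, sy g1} = {y, sy g2}" using F2[OF g(1,3,4)] F2[OF g(2,5,6)] g(7) by simp
    have "sy g1 \<noteq> y" using F2[OF g(1,3,4)] g(4) yC by blast
    hence "sy g1 = sy g2" using e by (metis doubleton_eq_iff)
    thus ?thesis using pm_uniq[OF p s g(1,2)] F2[OF g(1,3,4)] F2[OF g(2,5,6)] by metis
  qed
  have inj: "inj_on psi M"
  proof (rule inj_onI)
    fix g1 g2 assume g: "g1 \<in> M" "g2 \<in> M" "psi g1 = psi g2"
    show "g1 = g2"
    proof (cases "g1 \<subseteq> C")
      case T1: True
      show ?thesis
      proof (cases "g2 \<subseteq> C")
        case True thus ?thesis using c11[OF g(1,2) T1 True g(3)] by blast
      next
        case F: False
        show ?thesis
        proof (cases "g2 \<subseteq> V - C")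
          case True thus ?thesis using c12[OF g(1,2) T1 F True g(3)] by blast
        next
          case False thus ?thesis using c13[OF g(1,2) T1 F False g(3)] by blast
        qed
      qed
    next
      case F1: False
      show ?thesis
      proof (cases "g1 \<subseteq> V - C")
        case T1: True
        show ?thesis
        proof (cases "g2 \<subseteq> C")
          case True thus ?thesis using c12[OF g(2,1) True F1 T1 g(3)[symmetric]] by blast
        next
          case F: False
          show ?thesis
          proof (cases "g2 \<subseteq> V - C")
            case True thus ?thesis using c22[OF g(1,2) F1 T1 F True g(3)] by blast
          next
            case False thus ?thesis using c23[OF g(1,2) F1 T1 F False g(3)] by blast
          qed
        qed
      next
        case F2: False
        show ?thesis
        proof (cases "g2 \<subseteq> C")
          case True thus ?thesis using c13[OF g(2,1) True F1 F2 g(3)[symmetric]] by blast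
        next
          case F: False
          show ?thesis
          proof (cases "g2 \<subseteq> V - C")
            case True thus ?thesis using c23[OF g(2,1) F True F1 F2 g(3)[symmetric]] by blast
          next
            case False thus ?thesis using F3[OF F1 F2] F3[OF F False] g(3) by metis
          qed
        qed
      qed
    qed
  qed
  have "psi ` M \<subseteq> D" using inD by blast
  hence "card M \<le> card D" using card_inj_on_le[OF inj _ fD] by blast
  thus ?thesis using cM by simp
qed

lemma isolated_disc:
  assumes v: "v \<in> V'" and w: "w \<in> V'" and vw: "v \<noteq> w"
    and noedge: "\<And>y. {v,y} \<notin> E'"
  shows "\<not> connected_graph V' E'"
proof
  assume "connected_graph V' E'"
  hence "(v,w) \<in> (rel E')\<^sup>*" unfolding conn_rel using v w by blast
  then obtain y where "(v,y) \<in> rel E'" using vw by (metis converse_rtranclE)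
  thus False using noedge unfolding rel_def by blast
qed

lemma lam_ge:
  assumes s: "simple_graph V E" and gd: "goodM V E M" and cV: "card V = 2*n" and n2: "n \<ge> 2"
    and mn: "minimal_graph V E" and DE: "D \<subseteq> E" and dc: "\<not> connected_graph V (E - D)"
  shows "n \<le> card D"
proof -
  have p: "perfect_matching V E M" using gd unfolding goodM_def by blast
  obtain u w where uw: "u \<in> V" "w \<in> V" "(u,w) \<notin> (rel (E - D))\<^sup>*"
    using dc unfolding conn_rel by blast
  define C where "C = {x\<in>V. (u,x) \<in> (rel (E - D))\<^sup>*}"
  have CV: "C \<subseteq> V" unfolding C_def by blast
  have uC: "u \<in> C" unfolding C_def using uw by blast
  have wC: "w \<in> V - C" unfolding C_def using uw by blast
  have cut: "{x,x'} \<in> D" if xx: "{x,x'}\<in>E" "x\<in>C" "x' \<in> V - C" for x x'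
  proof (rule ccontr)
    assume "{x,x'} \<notin> D"
    hence "(x,x') \<in> rel (E - D)" using xx unfolding rel_def by blast
    moreover have "(u,x) \<in> (rel (E - D))\<^sup>*" using xx(2) unfolding C_def by blast
    ultimately have "(u,x') \<in> (rel (E - D))\<^sup>*" by (rule rtrancl_into_rtrancl[rotated])
    thus False using xx(3) unfolding C_def by blast
  qed
  let ?g0 = "mE M u"
  have g0: "?g0 \<in> M" "u \<in> ?g0" using mE_in[OF p uw(1)] by blast+
  have g0V: "?g0 \<subseteq> V" using g0 pm_sub[OF p] sg_sub[OF s] by blast
  show ?thesis
  proof (cases "?g0 \<subseteq> C")
    case True
    have "mE M w \<noteq> ?g0" using mE_in[OF p uw(2)] wC True by blast
    hence "\<exists>x\<in>?g0. {w,x} \<in> E" using good_nb[OF gd g0(1) _ _, of "mE M w" w] mE_in[OF p uw(2)] by blast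
    then obtain x1 where x1: "x1 \<in> ?g0" "{w,x1} \<in> E" by blast
    obtain a b where ab: "a \<noteq> b" "?g0 = {a,b}" using pm_edge[OF p s g0(1)] by blast
    obtain x0 where x0: "x0 \<noteq> x1" "?g0 = {x1,x0}" using other_end[of x1 a b] ab x1(1) by auto
    have wg0: "w \<notin> ?g0" using wC True by blast
    have nE: "{w,x0} \<notin> E"
    proof
      assume "{w,x0} \<in> E"
      thus False using min_uniq[OF s gd cV n2 mn uw(2) g0(1) wg0, of x0 x1] x0 x1 by blast
    qed
    have x0C: "x0 \<in> C" using x0 True by blast
    show ?thesis
    proof (rule lam_gen[OF s gd cV DE CV x0C wC cut])
      show "\<not>({x0,w}\<in>E \<and> (\<exists>g1\<in>M. x0\<in>g1 \<and> g1\<subseteq>C) \<and> (\<exists>g2\<in>M. w\<in>g2 \<and> g2 \<subseteq> V-C))"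
        using nE by (simp add: insert_commute)
    qed
  next
    case False
    then obtain z0 where z0: "z0 \<in> ?g0" "z0 \<notin> C" by blast
    have z0C: "z0 \<in> V - C" using z0 g0V by blast
    show ?thesis
    proof (rule lam_gen[OF s gd cV DE CV uC z0C cut])
      show "\<not>({u,z0}\<in>E \<and> (\<exists>g1\<in>M. u\<in>g1 \<and> g1\<subseteq>C) \<and> (\<exists>g2\<in>M. z0\<in>g2 \<and> g2 \<subseteq> V-C))"
      proof
        assume "{u,z0}\<in>E \<and> (\<exists>g1\<in>M. u\<in>g1 \<and> g1\<subseteq>C) \<and> (\<exists>g2\<in>M. z0\<in>g2 \<and> g2 \<subseteq> V-C)"
        then obtain g1 where g1: "g1 \<in> M" "u \<in> g1" "g1 \<subseteq> C" by blast
        have "g1 = ?g0" using pm_uniq[OF p s g1(1) g0(1)] g1(2) g0(2) by blast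
        thus False using g1(3) False by blast
      qed
    qed
  qed
qed

theorem lemma2p3:
  fixes V :: "'a set" and E :: "'a set set" and n :: nat
  assumes "simple_graph V E"
    and "n \<ge> 2"
    and "card V = 2 * n"
    and "\<exists>M. perfect_matching V E M"
    and "max_forcing_number V E = n - 1"
  shows "(\<forall>e\<in>E. \<not> fixed_double_bond V E e)
       \<and> (\<forall>e\<in>E. \<exists>M. perfect_matching V (E - {e}) M)
       \<and> vertex_connectivity V E \<ge> n
       \<and> (minimal_graph V E \<longrightarrow>
            regular V E n \<and> vertex_connectivity V E = n \<and> edge_connectivity V E = n)"
proof -
  note s = assms(1) and n2 = assms(2) and cV = assms(3)
  obtain M where gd: "goodM V E M" using exists_good[OF assms] by blast
  have p: "perfect_matching V E M" using gd unfolding goodM_def by blast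
  have fV: "finite V" using s unfolding simple_graph_def by blast
  have fE: "finite E" using sg_finite_E[OF s] .
  have P1: "\<forall>e\<in>E. \<not> fixed_double_bond V E e"
  proof
    fix e assume "e \<in> E"
    then obtain M' where "perfect_matching V E M'" "e \<notin> M'" using good_avoid[OF s gd cV n2] by blast
    thus "\<not> fixed_double_bond V E e" unfolding fixed_double_bond_def by blast
  qed
  have P2: "\<forall>e\<in>E. \<exists>M. perfect_matching V (E - {e}) M"
  proof
    fix e assume "e \<in> E"
    then obtain M' where "perfect_matching V E M'" "e \<notin> M'" using good_avoid[OF s gd cV n2] by blast
    thus "\<exists>M. perfect_matching V (E - {e}) M" using pm_minus by blast
  qed
  let ?K = "{card S | S. S \<subseteq> V \<and>
      (card (V - S) \<le> 1 \<or> \<not> connected_graph (V - S) (del_vertices_edges E S))}"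
  have Kfin: "finite ?K"
  proof -
    have "?K \<subseteq> card ` Pow V"
    proof
      fix x assume "x \<in> ?K"
      then obtain S where "x = card S" "S \<subseteq> V" by blast
      thus "x \<in> card ` Pow V" by blast
    qed
    thus ?thesis using fV finite_subset by blast
  qed
  have "V \<subseteq> V \<and> (card (V - V) \<le> 1 \<or> \<not> connected_graph (V - V) (del_vertices_edges E V))" by simp
  hence "card V \<in> ?K" by blast
  hence Kne: "?K \<noteq> {}" by blast
  have P3: "vertex_connectivity V E \<ge> n"
  proof -
    have mem: "vertex_connectivity V E \<in> ?K" unfolding vertex_connectivity_def by (rule Min_in[OF Kfin Kne])
    have "\<exists>S. vertex_connectivity V E = card S \<and> S \<subseteq> V \<and>
      (card (V - S) \<le> 1 \<or> \<not> connected_graph (V - S) (del_vertices_edges E S))"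
      using mem by (simp only: mem_Collect_eq)
    then obtain S where S: "S \<subseteq> V" "card (V - S) \<le> 1 \<or> \<not> connected_graph (V - S) (del_vertices_edges E S)"
      "card S = vertex_connectivity V E" by metis
    show ?thesis
    proof (rule ccontr)
      assume "\<not> vertex_connectivity V E \<ge> n"
      hence "card S < n" using S(3) by simp
      hence k: "card (V - S) > 1 \<and> connected_graph (V - S) (del_vertices_edges E S)"
        using kappa_one[OF s gd cV n2 S(1)] by blast
      hence "\<not> (card (V - S) \<le> 1 \<or> \<not> connected_graph (V - S) (del_vertices_edges E S))" by simp
      thus False using S(2) by blast
    qed
  qed
  have P4: "regular V E n \<and> vertex_connectivity V E = n \<and> edge_connectivity V E = n"
    if mn: "minimal_graph V E"
  proof -
    have reg: "regular V E n" unfolding regular_def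
      using deg_nbr[OF s] nbr_card[OF s gd cV n2 mn] by simp
    have "V \<noteq> {}" using cV n2 by auto
    then obtain v where vV: "v \<in> V" by blast
    have cN: "card (nbr E v) = n" using nbr_card[OF s gd cV n2 mn vV] .
    have NV: "nbr E v \<subseteq> V" using nbr_V[OF s] .
    have vN: "v \<notin> nbr E v" using nbr_ne[OF s] by blast
    have fN: "finite (nbr E v)" using NV fV finite_subset by blast
    have "card (V - nbr E v) = n" using card_Diff_subset[OF fN NV] cN cV by simp
    hence "card (V - nbr E v - {v}) \<ge> 1" using vV vN n2 fV by simp
    hence "V - nbr E v - {v} \<noteq> {}" by fastforce
    then obtain w where w: "w \<in> V - nbr E v" "w \<noteq> v" by blast
    have "\<not> connected_graph (V - nbr E v) (del_vertices_edges E (nbr E v))"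
    proof (rule isolated_disc[of v _ w])
      show "v \<in> V - nbr E v" using vV vN by blast
      show "w \<in> V - nbr E v" using w by blast
      show "v \<noteq> w" using w by blast
      fix y show "{v,y} \<notin> del_vertices_edges E (nbr E v)"
        unfolding del_vertices_edges_def nbr_def by blast
    qed
    hence "\<exists>S. n = card S \<and> S \<subseteq> V \<and>
      (card (V - S) \<le> 1 \<or> \<not> connected_graph (V - S) (del_vertices_edges E S))" using NV cN by metis
    hence "n \<in> ?K" by (simp only: mem_Collect_eq)
    hence k1: "vertex_connectivity V E \<le> n" unfolding vertex_connectivity_def by (rule Min_le[OF Kfin])
    let ?L = "{card D | D. D \<subseteq> E \<and> \<not> connected_graph V (E - D)}"
    have Lfin: "finite ?L"
    proof -
      have "?L \<subseteq> card ` Pow E"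
      proof
        fix x assume "x \<in> ?L"
        then obtain D where "x = card D" "D \<subseteq> E" by blast
        thus "x \<in> card ` Pow E" by blast
      qed
      thus ?thesis using fE finite_subset by blast
    qed
    let ?D0 = "{f\<in>E. v\<in>f}"
    have cD0: "card ?D0 = n" using reg vV unfolding regular_def degree_def by simp
    have wV: "w \<in> V" using w by blast
    have "\<not> connected_graph V (E - ?D0)"
      by (rule isolated_disc[OF vV wV]) (use w in auto)
    hence "\<exists>D. n = card D \<and> D \<subseteq> E \<and> \<not> connected_graph V (E - D)" using cD0
      by (metis (no_types, lifting) mem_Collect_eq subsetI)
    hence nL: "n \<in> ?L" by (simp only: mem_Collect_eq)
    hence l1: "edge_connectivity V E \<le> n" unfolding edge_connectivity_def by (rule Min_le[OF Lfin])
    have Lne: "?L \<noteq> {}" using nL by blast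
    have "edge_connectivity V E \<in> ?L" unfolding edge_connectivity_def by (rule Min_in[OF Lfin Lne])
    hence "\<exists>D. edge_connectivity V E = card D \<and> D \<subseteq> E \<and> \<not> connected_graph V (E - D)"
      by (simp only: mem_Collect_eq)
    then obtain D where D: "D \<subseteq> E" "\<not> connected_graph V (E - D)" "card D = edge_connectivity V E" by metis
    have "n \<le> edge_connectivity V E" using lam_ge[OF s gd cV n2 mn D(1,2)] D(3) by simp
    thus ?thesis using reg k1 l1 P3 by simp
  qed
  show ?thesis using P1 P2 P3 P4 by simp
qed

end
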